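(* Let $m \geq 3$ be an integer, and for $n \geq 1$ let $$\Omega(n \gamma_{c}) = \frac{m}{(m-1)^2 n^2}\sum_{d\mid n} (-1)^{m d + 1}\, \mu\!\left(\frac{n}{d} \right) \binom{(m-1)^2 d}{d},$$ where $\mu$ is the Möbius function. Then, as $n \to \infty$, $$\Omega(n \gamma_{c}) \sim (-1)^{m n + 1} \left( \frac{1}{m-1} \sqrt{\frac{m}{2\pi (m-2)}} \right) n^{-5/2} e^{c_{m} n},$$ i.e. the ratio of the two sides tends to $1$, where $$c_{m} = (m-1)^2 \log \bigl[ (m-1)^2 \bigr] - m (m-2) \log \bigl[ m (m-2) \bigr].$$
   Context: In the paper, $\Omega(n\gamma_c)$ is the BPS index of charge $n\gamma_c$ associated with an $m$-herd spectral network (equivalently, the Donaldson–Thomas invariant of the $m$-Kronecker quiver for dimension vector $(n,n)$ in the wild stability chamber); it is given by the displayed closed formula, which is all the statement uses. *)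

theory Defs
  imports "HOL-Analysis.Analysis" "HOL-Computational_Algebra.Squarefree"
begin

definition moebius_mu :: "nat \<Rightarrow> int" where
  "moebius_mu n = (if squarefree n then (-1) ^ card (prime_factors n) else 0)"

definition Omega_herd :: "nat \<Rightarrow> nat \<Rightarrow> real" where
  "Omega_herd m n =
     real m / (real ((m - 1)^2) * real (n^2)) *
     (\<Sum>d | d dvd n. (-1) ^ (m * d + 1) * real_of_int (moebius_mu (n div d))
                      * real (((m - 1)^2 * d) choose d))"

definition c_herd :: "nat \<Rightarrow> real" where
  "c_herd m = real ((m - 1)^2) * ln (real ((m - 1)^2)) - real (m * (m - 2)) * ln (real (m * (m - 2)))"

end

theory Submission
  imports Defs "HOL-Real_Asymp.Real_Asymp"
begin


lemma ln_lower: fixes t :: real assumes "0 \<le> t" shows "2*t/(2+t) \<le> ln (1+t)"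
proof -
  let ?f = "\<lambda>t::real. ln (1+t) - 2*t/(2+t)"
  have "?f 0 \<le> ?f t"
  proof (rule DERIV_nonneg_imp_nondecreasing[OF assms])
    fix x :: real assume x: "0 \<le> x" "x \<le> t"
    have "DERIV ?f x :> (1/(1+x) - 4/(2+x)^2)"
      using x by (auto intro!: derivative_eq_intros simp: power2_eq_square field_simps)
    moreover have "4/(2+x)^2 \<le> 1/(1+x)"
      using x by (simp add: divide_simps power2_eq_square algebra_simps)
    ultimately show "\<exists>y. DERIV ?f x :> y \<and> y \<ge> 0" by force
  qed
  thus ?thesis by simp
qed

lemma ln_upper: fixes t :: real assumes "0 \<le> t" shows "ln (1+t) \<le> t - t^2/2 + t^3/3"
proof -
  let ?f = "\<lambda>t::real. t - t^2/2 + t^3/3 - ln (1+t)"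
  have "?f 0 \<le> ?f t"
  proof (rule DERIV_nonneg_imp_nondecreasing[OF assms])
    fix x :: real assume x: "0 \<le> x" "x \<le> t"
    have "DERIV ?f x :> (1 - x + x^2 - 1/(1+x))"
      using x by (auto intro!: derivative_eq_intros simp: power2_eq_square field_simps)
    moreover have "1 - x + x^2 - 1/(1+x) = x^3/(1+x)"
      using x by (simp add: field_simps power2_eq_square power3_eq_cube)
    moreover have "x^3/(1+x) \<ge> 0" using x by simp
    ultimately show "\<exists>y. DERIV ?f x :> y \<and> y \<ge> 0" by metis
  qed
  thus ?thesis by simp
qed

definition Lf :: "nat \<Rightarrow> real" where
  "Lf n = ln (fact n) - ln (real n)/2 - real n * (ln (real n) - 1)"

lemma Lf_diff: assumes "n \<ge> 1" shows "Lf n - Lf (Suc n) = (real n + 1/2) * ln (1 + 1/real n) - 1"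
proof -
  have h1: "ln (fact (Suc n) :: real) = ln (real n + 1) + ln (fact n)"
    by (simp add: ln_mult_pos add.commute)
  have h2: "ln (1 + 1/real n) = ln (real n + 1) - ln (real n)"
  proof -
    have "1 + 1/real n = (real n + 1)/real n" using assms by (simp add: field_simps)
    thus ?thesis using assms by (simp add: ln_divide_pos)
  qed
  show ?thesis unfolding Lf_def h2 h1 by (simp add: algebra_simps)
qed

lemma Lf_diff_nonneg: assumes "n \<ge> 1" shows "Lf n - Lf (Suc n) \<ge> 0"
proof -
  have "2*(1/real n)/(2+1/real n) \<le> ln (1 + 1/real n)" by (rule ln_lower) simp
  moreover have "2*(1/real n)/(2+1/real n) = 2/(2*real n+1)" using assms by (simp add: field_simps)
  ultimately have "(real n + 1/2) * (2/(2*real n+1)) \<le> (real n + 1/2) * ln (1 + 1/real n)"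
    by (intro mult_left_mono) auto
  moreover have "(real n + 1/2) * (2/(2*real n+1)) = 1" by (simp add: field_simps)
  ultimately have "1 \<le> (real n + 1/2) * ln (1 + 1/real n)" by linarith
  thus ?thesis using Lf_diff[OF assms] by linarith
qed

lemma Lf_diff_upper: assumes "n \<ge> 1" shows "Lf n - Lf (Suc n) \<le> 1/(2*real n) - 1/(2*real (Suc n))"
proof -
  define t where "t = 1/real n"
  have t: "0 < t" "t \<le> 1" using assms by (auto simp: t_def)
  have np: "real n > 0" using assms by simp
  have "ln (1+t) \<le> t - t^2/2 + t^3/3" by (rule ln_upper) (use t in simp)
  hence "(real n + 1/2) * ln (1+t) - 1 \<le> (real n + 1/2) * (t - t^2/2 + t^3/3) - 1"
    by (intro diff_right_mono mult_left_mono) auto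
  also have "(real n + 1/2) * (t - t^2/2 + t^3/3) - 1 = t^2/12 + t^3/6"
    using np by (simp add: t_def field_simps power2_eq_square power3_eq_cube)
  also have "t^2/12 + t^3/6 \<le> t^2/4"
  proof -
    have "t^3 \<le> t^2" using t by (simp add: power3_eq_cube power2_eq_square mult_left_le)
    thus ?thesis by simp
  qed
  also have "t^2/4 \<le> 1/(2*real n) - 1/(2*real (Suc n))"
  proof -
    have e1: "1/(2*real n) - 1/(2*real (Suc n)) = 1/(2*real n*(real n+1))"
      using assms by (simp add: field_simps)
    have e2: "t^2/4 = 1/(4*real n*real n)" by (simp add: t_def power2_eq_square)
    have "1/(4*real n*real n) \<le> 1/(2*real n*(real n+1))"
      using np by (intro divide_left_mono mult_pos_pos) (auto simp: algebra_simps)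
    thus ?thesis using e1 e2 by simp
  qed
  finally show ?thesis using Lf_diff[OF assms] by (simp add: t_def)
qed

lemma Lf_convergent: "convergent (\<lambda>k. Lf (Suc k))"
proof -
  let ?a = "\<lambda>k. Lf (Suc k)"
  have dec: "decseq ?a"
    by (rule decseq_SucI) (use Lf_diff_nonneg in force)
  have inc: "incseq (\<lambda>k. ?a k - 1/(2*real (Suc k)))"
  proof (rule incseq_SucI)
    fix k
    have "Lf (Suc k) - Lf (Suc (Suc k)) \<le> 1/(2*real (Suc k)) - 1/(2*real (Suc (Suc k)))"
      by (rule Lf_diff_upper) simp
    thus "?a k - 1/(2*real (Suc k)) \<le> ?a (Suc k) - 1/(2*real (Suc (Suc k)))" by simp
  qed
  have "?a k \<ge> ?a 0 - 1/2" for k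
  proof -
    have "?a 0 - 1/(2*real (Suc 0)) \<le> ?a k - 1/(2*real (Suc k))"
      using incseqD[OF inc, of 0 k] by (simp only:)
    moreover have "1/(2*real (Suc k)) \<ge> 0" by simp
    moreover have "1/(2*real (Suc 0)) = 1/2" by simp
    ultimately show ?thesis by linarith
  qed
  then obtain L where "?a \<longlonglongrightarrow> L" using decseq_convergent[OF dec] by blast
  thus ?thesis by (auto simp: convergent_def)
qed



definition sr :: "nat \<Rightarrow> real" where
  "sr n = fact n / (sqrt (real n) * (real n / exp 1) ^ n)"

lemma sr_pos: "n \<ge> 1 \<Longrightarrow> sr n > 0"
  by (simp add: sr_def)

lemma sr_exp_Lf: assumes "n \<ge> 1" shows "sr n = exp (Lf n)"
proof -
  have np: "real n > 0" using assms by simp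
  have "ln (sr n) = Lf n"
    using np unfolding sr_def Lf_def
    by (simp add: ln_div ln_mult ln_realpow ln_sqrt algebra_simps)
  thus ?thesis using sr_pos[OF assms] by (metis exp_ln)
qed

lemma sr_conv: obtains S where "sr \<longlonglongrightarrow> S" "S > 0"
proof -
  obtain l where l: "(\<lambda>k. Lf (Suc k)) \<longlonglongrightarrow> l" using Lf_convergent by (auto simp: convergent_def)
  have "(\<lambda>k. exp (Lf (Suc k))) \<longlonglongrightarrow> exp l" by (intro tendsto_intros l)
  hence "(\<lambda>k. sr (Suc k)) \<longlonglongrightarrow> exp l" by (simp add: sr_exp_Lf)
  hence "sr \<longlonglongrightarrow> exp l" by (rule LIMSEQ_imp_Suc)
  thus ?thesis using that by auto
qed

lemma wallis_step_alg: fixes P c x :: real assumes "x \<ge> 0"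
  shows "P * (4*(x+1)^2/((2*x+1)*(2*x+3))) * ((2*x+2)*(2*x+1)*c)^2 * (2*(x+1)+1)
       = (P*c^2*(2*x+1)) * (16*(x+1)^4)"
proof -
  have D: "(2*x+1)*(2*x+3) \<noteq> 0" using assms by simp
  have "P * (4*(x+1)^2/((2*x+1)*(2*x+3))) * ((2*x+2)*(2*x+1)*c)^2 * (2*(x+1)+1)
       = (P * (4*(x+1)^2) * ((2*x+2)*(2*x+1)*c)^2 * (2*x+3)) / ((2*x+1)*(2*x+3))"
    by (simp add: algebra_simps)
  also have "(P * (4*(x+1)^2) * ((2*x+2)*(2*x+1)*c)^2 * (2*x+3)) = 
     ((P*c^2*(2*x+1)) * (16*(x+1)^4)) * ((2*x+1)*(2*x+3))"
    by (simp add: power2_eq_square power4_eq_xxxx algebra_simps)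
  also have "\<dots> / ((2*x+1)*(2*x+3)) = (P*c^2*(2*x+1)) * (16*(x+1)^4)"
    using D by simp
  finally show ?thesis .
qed

lemma wallis_fact: "(\<Prod>k=1..n. (4*real k^2) / (4*real k^2 - 1)) * fact (2*n)^2 * (2*real n + 1)
   = 16^n * fact n ^ 4"
proof (induction n)
  case 0 thus ?case by simp
next
  case (Suc n)
  let ?P = "\<Prod>k=1..n. (4*real k^2) / (4*real k^2 - 1)"
  have f2: "(fact (2*Suc n) :: real) = (2*real n + 2) * (2*real n + 1) * fact (2*n)"
    by (simp add: algebra_simps)
  have q: "4*(1 + real n)^2 - 1 = (1 + 2*real n)*(3 + 2*real n)"
    by (simp add: algebra_simps power2_eq_square)
  have pr: "(\<Prod>k=1..Suc n. (4*real k^2) / (4*real k^2 - 1)) = ?P * (4*(real n+1)^2/((2*real n+1)*(2*real n+3)))"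
    by (subst prod.nat_ivl_Suc') (simp_all add: q ac_simps)
  have "(\<Prod>k=1..Suc n. (4*real k^2) / (4*real k^2 - 1)) * fact (2*Suc n)^2 * (2*real (Suc n) + 1)
     = ?P * (4*(real n+1)^2/((2*real n+1)*(2*real n+3))) * ((2*real n+2)*(2*real n+1)*fact (2*n))^2 * (2*(real n+1)+1)"
    unfolding pr f2 by simp
  also have "\<dots> = (?P * fact (2*n)^2 * (2*real n+1)) * (16*(real n+1)^4)"
    by (rule wallis_step_alg) simp
  also have "\<dots> = 16^Suc n * fact (Suc n) ^ 4"
  proof -
    have fs: "(fact (Suc n)::real) = (1+real n) * fact n" by simp
    show ?thesis unfolding Suc.IH fs by (simp only: power_mult_distrib power_Suc) (simp add: ac_simps)
  qed
  finally show ?case .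
qed

lemma wallis_sr: assumes "n \<ge> 1"
  shows "(\<Prod>k=1..n. (4*real k^2) / (4*real k^2 - 1)) = sr n ^ 4 / sr (2*n) ^ 2 * (real n / (2*(2*real n + 1)))"
proof -
  define u where "u = (real n / exp 1) ^ n"
  have np: "real n > 0" using assms by simp
  have u: "u > 0" using np by (simp add: u_def)
  have A: "fact n = sr n * sqrt (real n) * u" using np by (simp add: sr_def u_def)
  have e: "(real (2*n) / exp 1) ^ (2*n) = 4^n * u^2"
  proof -
    have "(real (2*n) / exp 1) ^ (2*n) = (2 * (real n / exp 1)) ^ (2*n)" by simp
    also have "\<dots> = 2^(2*n) * ((real n / exp 1) ^ n)^2"
      by (simp only: power_mult_distrib) (simp add: power_mult[symmetric] mult.commute[of n 2])
    also have "\<dots> = 4^n * u^2" by (simp add: u_def power_mult)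
    finally show ?thesis .
  qed
  have B: "fact (2*n) = sr (2*n) * sqrt (2*real n) * (4^n * u^2)"
    using np e[symmetric] by (simp add: sr_def)
  have s1: "sr n > 0" "sr (2*n) > 0" using assms by (auto intro!: sr_pos)
  have W: "(\<Prod>k=1..n. (4*real k^2) / (4*real k^2 - 1)) = 16^n * fact n ^ 4 / (fact (2*n)^2 * (2*real n + 1))"
  proof -
    have Y: "(fact (2*n)^2 * (2*real n + 1) :: real) \<noteq> 0" by simp
    show ?thesis using Y wallis_fact[of n] by (simp only: eq_divide_eq mult.assoc) simp
  qed
  have sq1: "sqrt (real n) ^ 4 = real n ^ 2"
    by (metis np less_imp_le power_mult real_sqrt_pow2 numeral_Bit0 numeral_One mult_2_right one_add_one power2_eq_square)
  have sq2: "sqrt (2 * real n) ^ 2 = 2 * real n" using np by simp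
  have "16^n * fact n ^ 4 / (fact (2*n)^2 * (2*real n + 1))
      = 16^n * (sr n ^ 4 * sqrt (real n) ^ 4 * u ^ 4) / (sr (2*n) ^ 2 * sqrt (2*real n) ^ 2 * (4^n)^2 * u^4 * (2*real n + 1))"
    unfolding A B by (simp add: power_mult_distrib power_mult[symmetric] mult.commute)
  also have "\<dots> = sr n ^ 4 / sr (2*n) ^ 2 * (real n / (2*(2*real n + 1)))"
  proof -
    have f: "((4::real)^n)^2 = 16^n" by (simp add: power_mult[symmetric] power_mult_distrib mult.commute[of n 2] power_mult)
    have g: "\<And>X U a b s1 s2 c :: real. X \<noteq> 0 \<Longrightarrow> U \<noteq> 0 \<Longrightarrow>
       X * (a * s1 * U) / (b * s2 * X * U * c) = a / b * (s1 / (s2 * c))" by (simp add: field_simps)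
    have h: "real n ^ 2 / (2 * real n * (2 * real n + 1)) = real n / (2*(2*real n + 1))"
    proof -
      have "real n ^ 2 / (2 * real n * (2 * real n + 1)) = real n * real n / (real n * (2*(2*real n+1)))"
        by (simp add: power2_eq_square ac_simps)
      also have "\<dots> = real n / (2*(2*real n + 1))" using np by (simp only: mult_divide_mult_cancel_left_if) simp
      finally show ?thesis .
    qed
    show ?thesis unfolding sq1 sq2 f using u np by (subst g) (auto simp: h)
  qed
  finally show ?thesis using W by simp
qed

lemma sr_limit: "sr \<longlonglongrightarrow> sqrt (2*pi)"
proof -
  obtain S where S: "sr \<longlonglongrightarrow> S" "S > 0" using sr_conv by blast
  have S2: "(\<lambda>n. sr (2*n)) \<longlonglongrightarrow> S"
    using LIMSEQ_subseq_LIMSEQ[OF S(1), of "\<lambda>n. 2*n"] by (simp add: strict_mono_def o_def)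
  have r: "(\<lambda>n. real n / (2*(2*real n + 1))) \<longlonglongrightarrow> 1/4" by real_asymp
  have "(\<lambda>n. sr n ^ 4 / sr (2*n) ^ 2 * (real n / (2*(2*real n + 1)))) \<longlonglongrightarrow> S^4/S^2 * (1/4)"
    using S(2) by (intro tendsto_intros S(1) S2 r) auto
  moreover have "eventually (\<lambda>n. sr n ^ 4 / sr (2*n) ^ 2 * (real n / (2*(2*real n + 1))) =
     (\<Prod>k=1..n. (4*real k^2) / (4*real k^2 - 1))) sequentially"
    using eventually_ge_at_top[of 1] by eventually_elim (rule wallis_sr[symmetric])
  ultimately have "(\<lambda>n. \<Prod>k=1..n. (4*real k^2) / (4*real k^2 - 1)) \<longlonglongrightarrow> S^4/S^2 * (1/4)"
    by (rule Lim_transform_eventually)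
  hence "pi/2 = S^4/S^2 * (1/4)" using wallis by (rule LIMSEQ_unique[rotated])
  hence "S^2 = 2*pi" using S(2) by (simp add: field_simps power2_eq_square power4_eq_xxxx)
  hence "S = sqrt (2*pi)" using S(2) by (metis less_imp_le real_sqrt_unique)
  thus ?thesis using S(1) by simp
qed



lemma fact_sr: "n \<ge> 1 \<Longrightarrow> (fact n :: real) = sr n * sqrt (real n) * (real n / exp 1) ^ n"
  by (simp add: sr_def)

lemma pow_split: fixes x :: real assumes "k = j + 1" shows "(real k * x) ^ (k*n) = real k ^ (k*n) * x^n * x^(j*n)"
proof -
  have e: "k*n = n + j*n" using assms by simp
  have "(real k * x)^(k*n) = real k^(k*n) * x^(k*n)" by (rule power_mult_distrib)
  also have "x^(k*n) = x^n * x^(j*n)" unfolding e by (rule power_add)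
  finally show ?thesis by (simp add: mult.assoc)
qed

lemma binom_sr:
  fixes k j n :: nat
  assumes kj: "k = j + 1" and j: "j \<ge> 1" and n: "n \<ge> 1"
  shows "real ((k*n) choose n) = sr (k*n) / (sr n * sr (j*n)) * sqrt (real k / real j) / sqrt (real n)
           * exp ((real k * ln (real k) - real j * ln (real j)) * real n)"
proof -
  define U where "U = (real n / exp 1)"
  have kn: "k*n - n = j*n" using kj by (simp add: algebra_simps)
  have np: "real n > 0" using n by simp
  have jp: "real j > 0" using j by simp
  have kp: "real k > 0" using kj by simp
  have Un: "U \<noteq> 0" using np by (simp add: U_def)
  have pos: "sr n > 0" "sr (j*n) > 0" "sr (k*n) > 0" using n j kj by (auto intro!: sr_pos)
  have "real ((k*n) choose n) = fact (k*n) / (fact n * fact (j*n))"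
    using binomial_fact[of n "k*n"] kj kn by simp
  also have "fact (k*n) = sr (k*n) * sqrt (real (k*n)) * (real k ^ (k*n) * U^n * U^(j*n))"
  proof -
    have "(real (k*n) / exp 1) ^ (k*n) = (real k * U) ^ (k*n)" by (simp add: U_def)
    also have "\<dots> = real k ^ (k*n) * U^n * U^(j*n)" by (rule pow_split[OF kj])
    finally show ?thesis using fact_sr[of "k*n"] n kj by simp
  qed
  also have "fact n = sr n * sqrt (real n) * U^n" using fact_sr[OF n] by (simp add: U_def)
  also have "fact (j*n) = sr (j*n) * sqrt (real (j*n)) * (real j ^ (j*n) * U^(j*n))"
  proof -
    have "real (j*n) / exp 1 = real j * U" by (simp add: U_def)
    hence "(real (j*n) / exp 1) ^ (j*n) = real j ^ (j*n) * U^(j*n)"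
      by (simp only: power_mult_distrib)
    thus ?thesis using fact_sr[of "j*n"] n j by simp
  qed
  also have "sr (k*n) * sqrt (real (k*n)) * (real k ^ (k*n) * U^n * U^(j*n)) /
      (sr n * sqrt (real n) * U^n * (sr (j*n) * sqrt (real (j*n)) * (real j ^ (j*n) * U^(j*n))))
    = sr (k*n) / (sr n * sr (j*n)) * (sqrt (real (k*n)) / (sqrt (real n) * sqrt (real (j*n)))) * (real k ^ (k*n) / real j ^ (j*n))"
    using Un pos np jp by (simp add: field_simps)
  also have "sqrt (real (k*n)) / (sqrt (real n) * sqrt (real (j*n))) = sqrt (real k / real j) / sqrt (real n)"
    using np jp by (simp add: real_sqrt_mult real_sqrt_divide field_simps)
  also have "real k ^ (k*n) / real j ^ (j*n) = exp ((real k * ln (real k) - real j * ln (real j)) * real n)"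
  proof -
    have "real k ^ (k*n) = exp (real (k*n) * ln (real k))"
      using kp by (subst exp_of_nat_mult) simp
    moreover have "real j ^ (j*n) = exp (real (j*n) * ln (real j))"
      using jp by (subst exp_of_nat_mult) simp
    ultimately show ?thesis by (simp add: exp_diff[symmetric] algebra_simps)
  qed
  finally show ?thesis by simp
qed



lemma decay: fixes c :: real assumes "c > 0"
  shows "(\<lambda>n. real n * sqrt (real n) * exp (-(c/2) * real n)) \<longlonglongrightarrow> 0"
  using assms by real_asymp

lemma moebius_abs: "\<bar>real_of_int (moebius_mu n)\<bar> \<le> 1"
  by (simp add: moebius_mu_def)

lemma moebius_one: "moebius_mu 1 = 1"
  by (simp add: moebius_mu_def)

lemma ratio_alg:
  fixes mm kk ss ee aa xx rr sg :: real
  assumes "ss > 0" "ee > 0" "aa \<noteq> 0" "kk \<noteq> 0" "sg = 1 \<or> sg = -1"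
  shows "(mm/(kk*(ss^2)^2) * (sg*(xx*ee/ss) + rr)) / (sg * aa * (1/ss^5) * ee) = mm/(kk*aa) * (xx + sg * rr * ss / ee)"
  using assms by (auto simp: field_simps power2_eq_square power_numeral_reduce)

lemma const_one:
  fixes m :: nat assumes "m \<ge> 3"
  shows "real m / (real ((m-1)^2) * (1 / real (m - 1) * sqrt (real m / (2 * pi * real (m - 2)))))
          * (sqrt (real ((m-1)^2) / real (m*(m-2))) / sqrt (2*pi)) = 1"
proof -
  define M where "M = real m"
  have M: "M \<ge> 3" using assms by (simp add: M_def)
  have e1: "real ((m-1)^2) = (M-1)^2" "real (m-1) = M - 1" "real (m-2) = M - 2" "real (m*(m-2)) = M*(M-2)"
    using assms by (simp_all add: M_def of_nat_diff)
  have s1: "sqrt ((M-1)^2 / (M*(M-2))) = (M-1) / sqrt (M*(M-2))"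
    using M by (simp add: real_sqrt_divide)
  have s2: "sqrt (M / (2 * pi * (M - 2))) * sqrt (M*(M-2)) * sqrt (2*pi) = M"
  proof -
    have "sqrt (M / (2 * pi * (M - 2))) * sqrt (M*(M-2)) * sqrt (2*pi) = sqrt (M / (2 * pi * (M - 2)) * (M*(M-2)) * (2*pi))"
      by (simp only: real_sqrt_mult)
    also have "M / (2 * pi * (M - 2)) * (M*(M-2)) * (2*pi) = M^2"
      using M pi_gt_zero by (simp add: field_simps power2_eq_square)
    finally show ?thesis using M by simp
  qed
  have g0: "\<And>a b c t :: real. a \<noteq> 0 \<Longrightarrow> b \<noteq> 0 \<Longrightarrow> c \<noteq> 0 \<Longrightarrow> t \<noteq> 0 \<Longrightarrow>
     M / (t^2 * (1/t * a)) * (t/b / c) = M / (a*b*c)"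
    by (simp add: field_simps power2_eq_square)
  have g: "\<And>a b c :: real. a \<noteq> 0 \<Longrightarrow> b \<noteq> 0 \<Longrightarrow> c \<noteq> 0 \<Longrightarrow>
     M / ((M-1)^2 * (1/(M-1) * a)) * ((M-1)/b / c) = M / (a*b*c)"
    using M by (intro g0) auto
  have "M / ((M-1)^2 * (1/(M-1) * sqrt (M / (2 * pi * (M - 2))))) * ((M-1)/sqrt (M*(M-2)) / sqrt (2*pi))
     = M / (sqrt (M / (2 * pi * (M - 2))) * sqrt (M*(M-2)) * sqrt (2*pi))"
    using M pi_gt_zero by (intro g) auto
  also have "\<dots> = 1" unfolding s2 using M by simp
  finally show ?thesis unfolding e1 M_def[symmetric] s1 .
qed

theorem proposition3p3:
  fixes m :: nat
  assumes "m \<ge> 3"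
  shows "Omega_herd m \<sim>[at_top]
           (\<lambda>n. (-1) ^ (m * n + 1) * (1 / real (m - 1) * sqrt (real m / (2 * pi * real (m - 2))))
                 * real n powr (-5/2) * exp (c_herd m * real n))"
proof -
  define k where "k = (m-1)^2"
  define j where "j = m*(m-2)"
  define A where "A = 1 / real (m - 1) * sqrt (real m / (2 * pi * real (m - 2)))"
  define c where "c = c_herd m"
  obtain t where t: "m = t + 3" using assms by (metis add.commute le_Suc_ex)
  have kj: "k = j + 1" unfolding k_def j_def t by (simp add: power2_eq_square algebra_simps)
  have j1: "j \<ge> 1" unfolding j_def t by simp
  have kpos: "real k > 0" using kj by simp
  have Apos: "A > 0" unfolding A_def using assms pi_gt_zero by (auto intro!: mult_pos_pos divide_pos_pos)
  have c_eq: "c = real k * ln (real k) - real j * ln (real j)" by (simp add: c_def c_herd_def k_def j_def)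
  have cpos: "c > 0"
  proof -
    have "real j * ln (real j) \<le> real j * ln (real k)"
      using j1 kj by (intro mult_left_mono) auto
    moreover have "real j * ln (real k) < real k * ln (real k)"
      using j1 kj by (intro mult_strict_right_mono) (auto intro!: ln_gt_zero)
    ultimately show ?thesis unfolding c_eq by linarith
  qed
  define Z where "Z d = sr (k*d) / (sr d * sr (j*d))" for d
  have Zlim: "Z \<longlonglongrightarrow> sqrt (2*pi) / (sqrt (2*pi) * sqrt (2*pi))"
  proof -
    have sm: "strict_mono (\<lambda>d. a*d)" if "a \<ge> 1" for a :: nat
      using that by (auto simp: strict_mono_def)
    have "(\<lambda>d. sr (k*d)) \<longlonglongrightarrow> sqrt (2*pi)"
      using LIMSEQ_subseq_LIMSEQ[OF sr_limit sm[of k]] kj by (simp add: o_def)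
    moreover have "(\<lambda>d. sr (j*d)) \<longlonglongrightarrow> sqrt (2*pi)"
      using LIMSEQ_subseq_LIMSEQ[OF sr_limit sm[of j]] j1 by (simp add: o_def)
    ultimately show ?thesis unfolding Z_def using pi_gt_zero
      by (intro tendsto_intros sr_limit) auto
  qed
  obtain MZ where MZ: "\<And>d. \<bar>Z d\<bar> \<le> MZ"
    using convergent_imp_Bseq[of Z] Zlim unfolding Bseq_def convergent_def by auto
  define M where "M = MZ * sqrt (real k / real j)"
  have binom: "real ((k*d) choose d) = Z d * sqrt (real k / real j) / sqrt (real d) * exp (c * real d)"
    if "d \<ge> 1" for d
    using binom_sr[OF kj j1 that] unfolding Z_def c_eq by simp
  have Bbound: "real ((k*d) choose d) \<le> M * exp (c * real d)" if "d \<ge> 1" for d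
  proof -
    have "real ((k*d) choose d) \<le> \<bar>Z d * sqrt (real k / real j) / sqrt (real d) * exp (c * real d)\<bar>"
      unfolding binom[OF that] by (rule abs_ge_self)
    also have "\<dots> = \<bar>Z d\<bar> * sqrt (real k / real j) / sqrt (real d) * exp (c * real d)"
      by (simp add: abs_mult)
    also have "\<dots> \<le> \<bar>Z d\<bar> * sqrt (real k / real j) * exp (c * real d)"
    proof -
      have "\<bar>Z d\<bar> * sqrt (real k / real j) / sqrt (real d) \<le> \<bar>Z d\<bar> * sqrt (real k / real j)"
      proof -
        have s1: "sqrt (real d) \<ge> 1" using that by simp
        have "\<bar>Z d\<bar> * sqrt (real k / real j) / sqrt (real d) \<le> \<bar>Z d\<bar> * sqrt (real k / real j) / 1"
          using s1 by (intro divide_left_mono) auto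
        thus ?thesis by simp
      qed
      thus ?thesis by (intro mult_right_mono) auto
    qed
    also have "\<dots> \<le> M * exp (c * real d)"
      unfolding M_def using MZ[of d] by (intro mult_right_mono) auto
    finally show ?thesis .
  qed
  have M0: "M \<ge> 0" unfolding M_def using MZ[of 0] by (intro mult_nonneg_nonneg) auto
  define R where "R n = (\<Sum>d\<in>{d. d dvd n \<and> d \<noteq> n}. (-1::real)^(m*d+1) * real_of_int (moebius_mu (n div d)) * real ((k*d) choose d))" for n
  have finD: "finite {d. d dvd n \<and> d \<noteq> n}" if "n \<ge> 1" for n :: nat
    by (rule finite_subset[OF _ finite_divisors_nat[of n]]) (use that in auto)
  have Om: "Omega_herd m n = real m / (real k * real n^2) * ((-1)^(m*n+1) * real ((k*n) choose n) + R n)"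
    if "n \<ge> 1" for n
  proof -
    have eq: "{d. d dvd n} = insert n {d. d dvd n \<and> d \<noteq> n}" by auto
    show ?thesis unfolding Omega_herd_def k_def[symmetric] eq using finD[OF that] that
      by (simp add: sum.insert moebius_one[simplified] R_def)
  qed
  have Rb: "\<bar>R n\<bar> \<le> real n * (M * exp (c * real n / 2))" if n1: "n \<ge> 1" for n
  proof -
    let ?D = "{d. d dvd n \<and> d \<noteq> n}"
    have "\<bar>R n\<bar> \<le> (\<Sum>d\<in>?D. \<bar>(-1::real)^(m*d+1) * real_of_int (moebius_mu (n div d)) * real ((k*d) choose d)\<bar>)"
      unfolding R_def by (rule sum_abs)
    also have "\<dots> \<le> (\<Sum>d\<in>?D. M * exp (c * real n / 2))"
    proof (rule sum_mono)
      fix d assume d: "d \<in> ?D"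
      then obtain q where q: "n = d * q" by auto
      have d1: "d \<ge> 1" using q n1 by (cases d) auto
      have "q \<noteq> 1" "q \<noteq> 0" using q d n1 by auto
      hence "q \<ge> 2" by linarith
      hence "2 * d \<le> n" unfolding q by (metis mult.commute mult_le_mono2)
      hence le: "c * real d \<le> c * real n / 2" using cpos by (simp add: field_simps)
      have "\<bar>(-1::real)^(m*d+1) * real_of_int (moebius_mu (n div d)) * real ((k*d) choose d)\<bar>
          = \<bar>real_of_int (moebius_mu (n div d))\<bar> * real ((k*d) choose d)"
        by (simp add: abs_mult)
      also have "\<dots> \<le> 1 * real ((k*d) choose d)"
        by (intro mult_right_mono moebius_abs) auto
      also have "\<dots> \<le> M * exp (c * real d)" using Bbound[OF d1] by simp
      also have "\<dots> \<le> M * exp (c * real n / 2)" using M0 le by (intro mult_left_mono) auto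
      finally show "\<bar>(-1::real)^(m*d+1) * real_of_int (moebius_mu (n div d)) * real ((k*d) choose d)\<bar> \<le> M * exp (c * real n / 2)" .
    qed
    also have "\<dots> = real (card ?D) * (M * exp (c * real n / 2))" by simp
    also have "\<dots> \<le> real n * (M * exp (c * real n / 2))"
    proof -
      have "?D \<subseteq> {1..n}"
      proof
        fix d assume "d \<in> ?D"
        hence dv: "d dvd n" by simp
        hence "d \<le> n" using n1 by (simp add: dvd_imp_le)
        moreover have "d \<noteq> 0" using dv n1 by (cases "d = 0") auto
        ultimately show "d \<in> {1..n}" by simp
      qed
      hence "card ?D \<le> n" using card_mono[of "{1..n}" ?D] by simp
      thus ?thesis using M0 by (intro mult_right_mono) auto
    qed
    finally show ?thesis .
  qed
  define X where "X n = Z n * sqrt (real k / real j)" for n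
  define sg where "sg n = (-1::real)^(m*n+1)" for n
  have sg: "sg n = 1 \<or> sg n = -1" for n unfolding sg_def minus_one_power_iff by auto
  have ratio: "Omega_herd m n / (sg n * A * real n powr (-5/2) * exp (c * real n))
      = real m/(real k * A) * (X n + sg n * R n * sqrt (real n) / exp (c * real n))" if n1: "n \<ge> 1" for n
  proof -
    have np: "real n > 0" using n1 by simp
    have p1: "real n ^ 2 = (sqrt (real n)^2)^2" using np by simp
    have p2: "real n powr (-5/2) = 1 / sqrt (real n)^5"
    proof -
      have "sqrt (real n)^5 = real n powr (5/2)"
        using np by (simp add: powr_half_sqrt[symmetric] powr_power)
      moreover have "real n powr (-5/2) = 1 / real n powr (5/2)"
        using powr_minus_divide[of "real n" "5/2"] by simp
      ultimately show ?thesis by simp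
    qed
    have b: "real ((k*n) choose n) = X n * exp (c*real n) / sqrt (real n)"
      using binom[OF n1] by (simp add: X_def)
    show ?thesis unfolding Om[OF n1] p1 p2 b sg_def[symmetric]
      by (rule ratio_alg) (use np sg Apos kpos in auto)
  qed
  have Xlim: "X \<longlonglongrightarrow> sqrt (2*pi) / (sqrt (2*pi) * sqrt (2*pi)) * sqrt (real k / real j)"
    unfolding X_def by (intro tendsto_intros Zlim)
  have Elim: "(\<lambda>n. sg n * R n * sqrt (real n) / exp (c * real n)) \<longlonglongrightarrow> 0"
  proof (rule Lim_null_comparison)
    show "(\<lambda>n. M * (real n * sqrt (real n) * exp (-(c/2) * real n))) \<longlonglongrightarrow> 0"
      using tendsto_mult_right_zero[OF decay[OF cpos], of M] .
    show "\<forall>\<^sub>F n in sequentially. norm (sg n * R n * sqrt (real n) / exp (c * real n))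
             \<le> M * (real n * sqrt (real n) * exp (-(c/2) * real n))"
      using eventually_ge_at_top[of 1]
    proof eventually_elim
      case (elim n)
      have "norm (sg n * R n * sqrt (real n) / exp (c * real n)) = \<bar>R n\<bar> * sqrt (real n) / exp (c * real n)"
        using sg[of n] by (auto simp: abs_mult)
      also have "\<dots> \<le> real n * (M * exp (c * real n / 2)) * sqrt (real n) / exp (c * real n)"
        using Rb[OF elim] by (intro divide_right_mono mult_right_mono) auto
      also have "\<dots> = M * (real n * sqrt (real n) * (exp (c * real n / 2) / exp (c * real n)))"
        by simp
      also have "exp (c * real n / 2) / exp (c * real n) = exp (-(c/2) * real n)"
        by (simp add: exp_diff[symmetric] field_simps)
      finally show ?case .
    qed
  qed
  have "(\<lambda>n. real m/(real k * A) * (X n + sg n * R n * sqrt (real n) / exp (c * real n)))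
      \<longlonglongrightarrow> real m/(real k * A) * (sqrt (2*pi) / (sqrt (2*pi) * sqrt (2*pi)) * sqrt (real k / real j) + 0)"
    by (intro tendsto_intros Xlim Elim)
  also have "real m/(real k * A) * (sqrt (2*pi) / (sqrt (2*pi) * sqrt (2*pi)) * sqrt (real k / real j) + 0) = 1"
  proof -
    have h: "sqrt (2*pi) / (sqrt (2*pi) * sqrt (2*pi)) * sqrt (real k / real j) = sqrt (real k / real j) / sqrt (2*pi)"
    proof -
      have g: "\<And>s x::real. s > 0 \<Longrightarrow> s / (s * s) * x = x / s" by (simp add: field_simps)
      show ?thesis using pi_gt_zero by (intro g) simp
    qed
    show ?thesis unfolding add_0_right h unfolding k_def j_def A_def by (rule const_one[OF assms])
  qed
  finally have lim1: "(\<lambda>n. real m/(real k * A) * (X n + sg n * R n * sqrt (real n) / exp (c * real n))) \<longlonglongrightarrow> 1" .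
  have lim: "((\<lambda>n. Omega_herd m n / (sg n * A * real n powr (-5/2) * exp (c * real n))) \<longlongrightarrow> 1) at_top"
  proof (rule Lim_transform_eventually[OF lim1])
    show "\<forall>\<^sub>F n in sequentially. real m/(real k * A) * (X n + sg n * R n * sqrt (real n) / exp (c * real n))
       = Omega_herd m n / (sg n * A * real n powr (-5/2) * exp (c * real n))"
      using eventually_ge_at_top[of 1] by eventually_elim (rule ratio[symmetric])
  qed
  show ?thesis using lim unfolding sg_def A_def c_def by (rule asymp_equivI')
qed


end
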